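(* Let $d,r$ be nonnegative integers with $1\le r\le\binom{m+d}{d}-r_d$. Then $\overline{e}_r(d,m)=\max|V(F_1,\dots,F_r)(\mathbb{F}_q)|$, where the maximum is over all sets $\{F_1,\dots,F_r\}$ of linearly independent projectively reduced homogeneous polynomials of degree $d$ in $\mathbb{F}_q[x_0,\dots,x_m]$ whose leading monomials $\mathrm{lm}(F_1),\dots,\mathrm{lm}(F_r)$ are distinct. Consequently, there is an integer $e_0$ such that $\overline{e}_r(d,m)\le A_r(d,m;e)$ for all $e\ge e_0$.
   Context: $q$ is a prime power, $\mathbb{F}_q$ the finite field with $q$ elements, $m$ a positive integer. A monomial $\mu\neq1$ in $x_0,\dots,x_m$ written $x_0^{a_0}\cdots x_k^{a_k}$ with $a_k>0$ is projectively reduced if $a_0,\dots,a_{k-1}\le q-1$; $1$ is projectively reduced; a polynomial is projectively reduced if it is an $\mathbb{F}_q$-linear combination of projectively reduced monomials. $\overline{\mathbb{M}}_e$ is the set of projectively reduced monomials of degree $e$. $r_d$ is the dimension of the degree-$d$ component of the ideal generated by $\{x_i^qx_j-x_ix_j^q:0\le i<j\le m\}$, so $|\overline{\mathbb{M}}_d|=\binom{m+d}{d}-r_d$. $V(F_1,\dots,F_r)(\mathbb{F}_q)$ is the set of points of $\mathbb{P}^m(\mathbb{F}_q)$ where all $F_i$ vanish. $\overline{e}_r(d,m)$ is the maximum of $|V(G_1,\dots,G_r)(\mathbb{F}_q)|$ over families of $r$ linearly independent projectively reduced homogeneous polynomials of degree $d$. Lexicographic order on monomials: $x_0^{b_0}\cdots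 x_m^{b_m}\prec x_0^{a_0}\cdots x_m^{a_m}$ iff at the first index where exponents differ $a_i>b_i$; $\mathrm{lm}(F)$ is the lexicographically largest monomial occurring in $F$ with nonzero coefficient. For a set $\mathcal{S}$ of monomials, $\Delta_e(\mathcal{S})=\{\mu\in\overline{\mathbb{M}}_e:\text{no }\nu\in\mathcal{S}\text{ divides }\mu\}$, and $A_r(d,m;e)=\max\{|\Delta_e(\mathcal{S})|:\mathcal{S}\subseteq\overline{\mathbb{M}}_d,|\mathcal{S}|=r\}$. *)

theory Defs
  imports Main HOL.Vector_Spaces "HOL-Library.Cardinality" "HOL-Library.Function_Algebras"
begin

(* Exponent vectors of monomials in x_0,...,x_m : functions nat => nat vanishing beyond m *)
definition mons :: "nat \<Rightarrow> (nat \<Rightarrow> nat) set" where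
  "mons m = {a. \<forall>i>m. a i = 0}"

definition mdeg :: "nat \<Rightarrow> (nat \<Rightarrow> nat) \<Rightarrow> nat" where
  "mdeg m a = (\<Sum>i\<le>m. a i)"

(* projectively reduced monomial (q = field size) *)
definition proj_reduced_mon :: "nat \<Rightarrow> nat \<Rightarrow> (nat \<Rightarrow> nat) \<Rightarrow> bool" where
  "proj_reduced_mon q m a \<longleftrightarrow> a \<in> mons m \<and>
     (a = (\<lambda>_. 0) \<or> (\<exists>k\<le>m. a k > 0 \<and> (\<forall>i>k. a i = 0) \<and> (\<forall>i<k. a i \<le> q - 1)))"

definition Mbar :: "nat \<Rightarrow> nat \<Rightarrow> nat \<Rightarrow> (nat \<Rightarrow> nat) set" where
  "Mbar q m e = {a. proj_reduced_mon q m a \<and> mdeg m a = e}"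

(* Polynomials: coefficient functions on exponent vectors *)
type_synonym 'a mpoly = "(nat \<Rightarrow> nat) \<Rightarrow> 'a"

definition psupp :: "'a::zero mpoly \<Rightarrow> (nat \<Rightarrow> nat) set" where
  "psupp F = {a. F a \<noteq> 0}"

definition mono :: "(nat \<Rightarrow> nat) \<Rightarrow> 'a::{zero,one} mpoly" where
  "mono a = (\<lambda>b. if b = a then 1 else 0)"

definition pr_hom :: "nat \<Rightarrow> nat \<Rightarrow> nat \<Rightarrow> 'a::zero mpoly \<Rightarrow> bool" where
  "pr_hom q m d F \<longleftrightarrow> psupp F \<subseteq> Mbar q m d"

definition peval :: "nat \<Rightarrow> 'a::comm_ring_1 mpoly \<Rightarrow> (nat \<Rightarrow> 'a) \<Rightarrow> 'a" where
  "peval m F x = (\<Sum>a\<in>psupp F. F a * (\<Prod>i\<le>m. x i ^ a i))"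

definition lin_indep_fam :: "nat \<Rightarrow> (nat \<Rightarrow> 'a::field mpoly) \<Rightarrow> bool" where
  "lin_indep_fam r F \<longleftrightarrow>
     (\<forall>c::nat \<Rightarrow> 'a. (\<lambda>a. \<Sum>i<r. c i * F i a) = (\<lambda>_. 0) \<longrightarrow> (\<forall>i<r. c i = 0))"

definition proj_space :: "'a::field itself \<Rightarrow> nat \<Rightarrow> (nat \<Rightarrow> 'a) set set" where
  "proj_space _ m =
     {x :: nat \<Rightarrow> 'a. (\<forall>i>m. x i = 0) \<and> x \<noteq> (\<lambda>_. 0)}
       // {(x, y). \<exists>c::'a. c \<noteq> 0 \<and> y = (\<lambda>i. c * x i)}"

definition zero_set :: "nat \<Rightarrow> nat \<Rightarrow> (nat \<Rightarrow> 'a::field mpoly) \<Rightarrow> (nat \<Rightarrow> 'a) set set" where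
  "zero_set m r F = {P \<in> proj_space TYPE('a) m. \<forall>x\<in>P. \<forall>i<r. peval m (F i) x = 0}"

definition lex_less :: "(nat \<Rightarrow> nat) \<Rightarrow> (nat \<Rightarrow> nat) \<Rightarrow> bool" where
  "lex_less b a \<longleftrightarrow> (\<exists>i. (\<forall>j<i. b j = a j) \<and> b i < a i)"

definition lm :: "'a::zero mpoly \<Rightarrow> (nat \<Rightarrow> nat)" where
  "lm F = (THE a. a \<in> psupp F \<and> (\<forall>b\<in>psupp F. b \<noteq> a \<longrightarrow> lex_less b a))"

definition ebar :: "'a::{finite,field} itself \<Rightarrow> nat \<Rightarrow> nat \<Rightarrow> nat \<Rightarrow> nat" where
  "ebar _ r d m = Max {card (zero_set m r F) | F :: nat \<Rightarrow> 'a mpoly.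
      lin_indep_fam r F \<and> (\<forall>i<r. pr_hom CARD('a) m d (F i))}"

(* r_d: dimension of the degree-d part of the ideal generated by x_i^q x_j - x_i x_j^q;
   this degree-d part is spanned by the products (monomial of degree d-q-1) * generator *)
definition ideal_gens_deg :: "'a::{finite,field} itself \<Rightarrow> nat \<Rightarrow> nat \<Rightarrow> 'a mpoly set" where
  "ideal_gens_deg _ m d =
     {(\<lambda>b. mono (\<lambda>k. a k + (if k = i then CARD('a) else 0) + (if k = j then 1 else 0)) b
          - mono (\<lambda>k. a k + (if k = i then 1 else 0) + (if k = j then CARD('a) else 0)) b)
       | a i j. a \<in> mons m \<and> mdeg m a + CARD('a) + 1 = d \<and> i < j \<and> j \<le> m}"

definition rdim :: "'a::{finite,field} itself \<Rightarrow> nat \<Rightarrow> nat \<Rightarrow> nat" where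
  "rdim T m d = vector_space.dim (\<lambda>(c::'a) (F::'a mpoly) a. c * F a) (ideal_gens_deg T m d)"

definition mdvd :: "(nat \<Rightarrow> nat) \<Rightarrow> (nat \<Rightarrow> nat) \<Rightarrow> bool" where
  "mdvd b a \<longleftrightarrow> (\<forall>i. b i \<le> a i)"

definition Delta :: "nat \<Rightarrow> nat \<Rightarrow> nat \<Rightarrow> (nat \<Rightarrow> nat) set \<Rightarrow> (nat \<Rightarrow> nat) set" where
  "Delta q m e S = {a \<in> Mbar q m e. \<not> (\<exists>b\<in>S. mdvd b a)}"

definition A_bound :: "nat \<Rightarrow> nat \<Rightarrow> nat \<Rightarrow> nat \<Rightarrow> nat \<Rightarrow> nat" where
  "A_bound q r d m e = Max {card (Delta q m e S) | S. S \<subseteq> Mbar q m d \<and> card S = r}"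

end

theory Submission
  imports Defs
begin


lemma lex_irrefl: "\<not> lex_less a a"
  unfolding lex_less_def by auto

lemma lex_trans: "lex_less a b \<Longrightarrow> lex_less b c \<Longrightarrow> lex_less a c"
  unfolding lex_less_def
proof (elim exE conjE)
  fix i j assume 1: "\<forall>k<i. a k = b k" "a i < b i" and 2: "\<forall>k<j. b k = c k" "b j < c j"
  show "\<exists>i. (\<forall>j<i. a j = c j) \<and> a i < c i"
  proof (cases "i < j")
    case True thus ?thesis using 1 2 by (intro exI[of _ i]) auto
  next
    case False
    show ?thesis
    proof (cases "i = j")
      case True thus ?thesis using 1 2 by (intro exI[of _ i]) auto
    next
      case False
      with \<open>\<not> i < j\<close> have "j < i" by simp
      thus ?thesis using 1 2 by (intro exI[of _ j]) auto
    qed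
  qed
qed

lemma lex_asym: "lex_less a b \<Longrightarrow> \<not> lex_less b a"
  using lex_irrefl lex_trans by blast

lemma lex_total: "a \<noteq> b \<Longrightarrow> lex_less a b \<or> lex_less b a"
proof -
  assume "a \<noteq> b"
  then have ex: "\<exists>i. a i \<noteq> b i" by auto
  define i where "i = (LEAST i. a i \<noteq> b i)"
  have ai: "a i \<noteq> b i" unfolding i_def using LeastI_ex[OF ex] .
  have lt: "\<forall>j<i. a j = b j" unfolding i_def using not_less_Least by blast
  show ?thesis
  proof (cases "a i < b i")
    case True thus ?thesis using lt unfolding lex_less_def by blast
  next
    case False
    then have "b i < a i" using ai by simp
    thus ?thesis using lt unfolding lex_less_def by (metis)
  qed
qed

lemma lex_add: "lex_less b a \<Longrightarrow> lex_less (c + b) (c + a)"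
  unfolding lex_less_def plus_fun_def by auto

lemma lex_max_exists:
  assumes "finite M" "M \<noteq> {}"
  shows "\<exists>u\<in>M. \<forall>b\<in>M. b \<noteq> u \<longrightarrow> lex_less b u"
  using assms
proof (induction M rule: finite_ne_induct)
  case (singleton x) thus ?case by auto
next
  case (insert x F)
  then obtain u where u: "u \<in> F" "\<forall>b\<in>F. b \<noteq> u \<longrightarrow> lex_less b u" by blast
  show ?case
  proof (cases "lex_less u x")
    case True
    show ?thesis
    proof (rule bexI[of _ x])
      show "\<forall>b\<in>insert x F. b \<noteq> x \<longrightarrow> lex_less b x"
      proof (intro ballI impI)
        fix b assume "b \<in> insert x F" "b \<noteq> x"
        then have "b \<in> F" by simp
        show "lex_less b x"
        proof (cases "b = u")
          case True thus ?thesis using \<open>lex_less u x\<close> by simp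
        next
          case False thus ?thesis using u \<open>b \<in> F\<close> \<open>lex_less u x\<close> lex_trans by blast
        qed
      qed
    qed simp
  next
    case False
    have "x \<noteq> u" using insert u by auto
    then have "lex_less x u" using False lex_total by blast
    thus ?thesis using u by auto
  qed
qed

lemma lm_eq:
  assumes "a \<in> psupp H" "\<forall>b\<in>psupp H. b \<noteq> a \<longrightarrow> lex_less b a"
  shows "lm H = a"
  unfolding lm_def
proof (rule the_equality)
  show "a \<in> psupp H \<and> (\<forall>b\<in>psupp H. b \<noteq> a \<longrightarrow> lex_less b a)" using assms by blast
next
  fix x assume x: "x \<in> psupp H \<and> (\<forall>b\<in>psupp H. b \<noteq> x \<longrightarrow> lex_less b x)"
  show "x = a"
  proof (rule ccontr)
    assume "x \<noteq> a"
    then have "lex_less x a" "lex_less a x" using x assms by auto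
    thus False using lex_asym by blast
  qed
qed

lemma lm_in:
  assumes "finite (psupp H)" "psupp H \<noteq> {}"
  shows "lm H \<in> psupp H \<and> (\<forall>b\<in>psupp H. b \<noteq> lm H \<longrightarrow> lex_less b (lm H))"
proof -
  obtain u where "u \<in> psupp H" "\<forall>b\<in>psupp H. b \<noteq> u \<longrightarrow> lex_less b u"
    using lex_max_exists[OF assms] by blast
  thus ?thesis using lm_eq[of u H] by simp
qed



definition indepI :: "'i set \<Rightarrow> ('i \<Rightarrow> 'a::field mpoly) \<Rightarrow> bool" where
 "indepI I F \<longleftrightarrow> (\<forall>c. (\<lambda>a. \<Sum>i\<in>I. c i * F i a) = (\<lambda>_. 0) \<longrightarrow> (\<forall>i\<in>I. c i = 0))"

definition spn :: "'i set \<Rightarrow> ('i \<Rightarrow> 'a::field mpoly) \<Rightarrow> 'a mpoly set" where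
 "spn I F = {H. \<exists>c. H = (\<lambda>a. \<Sum>i\<in>I. c i * F i a)}"

lemma delta_sum: "finite I \<Longrightarrow> i \<in> I \<Longrightarrow> (\<Sum>j\<in>I. (if j = i then 1 else 0) * g j) = (g i :: 'a::semiring_1)"
proof -
  assume "finite I" "i \<in> I"
  have "(\<Sum>j\<in>I. (if j = i then 1 else 0) * g j) = (\<Sum>j\<in>I. if j = i then g j else 0)"
    by (rule sum.cong) auto
  thus ?thesis using \<open>finite I\<close> \<open>i \<in> I\<close> by (simp add: sum.delta')
qed

lemma spn_zero: "(\<lambda>_. 0) \<in> spn I F"
  unfolding spn_def by (rule CollectI, rule exI[of _ "\<lambda>_. 0"]) simp

lemma spn_add: "H1 \<in> spn I F \<Longrightarrow> H2 \<in> spn I F \<Longrightarrow> (\<lambda>a. H1 a + H2 a) \<in> spn I F"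
  unfolding spn_def
proof (elim CollectE exE, rule CollectI)
  fix c1 c2 assume "H1 = (\<lambda>a. \<Sum>i\<in>I. c1 i * F i a)" "H2 = (\<lambda>a. \<Sum>i\<in>I. c2 i * F i a)"
  thus "\<exists>c. (\<lambda>a. H1 a + H2 a) = (\<lambda>a. \<Sum>i\<in>I. c i * F i a)"
    by (intro exI[of _ "\<lambda>i. c1 i + c2 i"]) (simp add: sum.distrib distrib_right)
qed

lemma spn_smult: "H \<in> spn I F \<Longrightarrow> (\<lambda>a. t * H a) \<in> spn I F"
  unfolding spn_def
proof (elim CollectE exE, rule CollectI)
  fix c assume "H = (\<lambda>a. \<Sum>i\<in>I. c i * F i a)"
  thus "\<exists>c. (\<lambda>a. t * H a) = (\<lambda>a. \<Sum>i\<in>I. c i * F i a)"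
    by (intro exI[of _ "\<lambda>i. t * c i"]) (simp add: sum_distrib_left mult.assoc)
qed

lemma spn_sum: "finite J \<Longrightarrow> \<forall>j\<in>J. H j \<in> spn I F \<Longrightarrow> (\<lambda>a. \<Sum>j\<in>J. t j * H j a) \<in> spn I F"
proof (induction J rule: finite_induct)
  case empty thus ?case using spn_zero by simp
next
  case (insert x J)
  have "(\<lambda>a. t x * H x a + (\<Sum>j\<in>J. t j * H j a)) \<in> spn I F"
    using insert by (intro spn_add spn_smult) auto
  thus ?case using insert by simp
qed

lemma spn_base: "i \<in> I \<Longrightarrow> finite I \<Longrightarrow> F i \<in> spn I F"
  unfolding spn_def
proof (rule CollectI, rule exI[of _ "\<lambda>j. if j = i then 1 else 0"])
  assume "i \<in> I" "finite I"
  show "F i = (\<lambda>a. \<Sum>j\<in>I. (if j = i then 1 else 0) * F j a)"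
    using \<open>i \<in> I\<close> \<open>finite I\<close> delta_sum[of I i "\<lambda>j. F j _"] by simp
qed

lemma spn_trans: "finite J \<Longrightarrow> \<forall>j\<in>J. H j \<in> spn I F \<Longrightarrow> X \<in> spn J H \<Longrightarrow> X \<in> spn I F"
  using spn_sum unfolding spn_def[of J H] by blast

lemma psupp_lc: fixes F :: "'i \<Rightarrow> 'a::field mpoly" shows "\<forall>i\<in>I. psupp (F i) \<subseteq> M \<Longrightarrow> psupp (\<lambda>a. \<Sum>i\<in>I. c i * F i a) \<subseteq> M"
  unfolding psupp_def
proof
  fix a assume "\<forall>i\<in>I. {a. F i a \<noteq> 0} \<subseteq> M" "a \<in> {a. (\<Sum>i\<in>I. c i * F i a) \<noteq> 0}"
  then have "(\<Sum>i\<in>I. c i * F i a) \<noteq> 0" by simp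
  then have "\<exists>i\<in>I. c i * F i a \<noteq> 0"
  proof (rule contrapos_np)
    assume "\<not> (\<exists>i\<in>I. c i * F i a \<noteq> 0)"
    then have "\<forall>i\<in>I. c i * F i a = 0" by blast
    thus "(\<Sum>i\<in>I. c i * F i a) = 0" by (rule sum.neutral)
  qed
  then obtain i where "i \<in> I" "c i * F i a \<noteq> 0" by blast
  then have "F i a \<noteq> 0" by auto
  thus "a \<in> M" using \<open>i \<in> I\<close> \<open>\<forall>i\<in>I. {a. F i a \<noteq> 0} \<subseteq> M\<close> by blast
qed

lemma psupp_spn: "\<forall>i\<in>I. psupp (F i) \<subseteq> M \<Longrightarrow> H \<in> spn I F \<Longrightarrow> psupp H \<subseteq> M"
  unfolding spn_def using psupp_lc by blast

lemma indep_nonzero: fixes F :: "'i \<Rightarrow> 'a::field mpoly"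
  assumes 1: "indepI I F" "i \<in> I" "finite I"
  shows "psupp (F i) \<noteq> {}"
proof
  assume "psupp (F i) = {}"
  then have "\<forall>a. F i a = 0" unfolding psupp_def by auto
  define c0 where "c0 = (\<lambda>j. if j = i then 1 else (0::'a))"
  have "(\<lambda>a. \<Sum>j\<in>I. c0 j * F j a) = (\<lambda>_. 0)"
    using 1 \<open>\<forall>a. F i a = 0\<close> delta_sum[of I i "\<lambda>j. F j _"] unfolding c0_def by simp
  moreover have "(\<lambda>a. \<Sum>j\<in>I. c0 j * F j a) = (\<lambda>_. 0) \<longrightarrow> (\<forall>j\<in>I. c0 j = 0)"
    using 1(1) unfolding indepI_def by blast
  ultimately have "c0 i = 0" using 1(2) by blast
  then show False unfolding c0_def by simp
qed



lemma echelon: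
  fixes F :: "'i \<Rightarrow> 'a::field mpoly"
  shows "finite M \<Longrightarrow> finite I \<Longrightarrow> indepI I F \<Longrightarrow> \<forall>i\<in>I. psupp (F i) \<subseteq> M \<Longrightarrow>
   \<exists>G. indepI I G \<and> (\<forall>i\<in>I. psupp (G i) \<subseteq> M) \<and> (\<forall>i\<in>I. G i \<in> spn I F) \<and> (\<forall>i\<in>I. F i \<in> spn I G)
      \<and> inj_on (\<lambda>i. lm (G i)) I \<and> (\<forall>i\<in>I. lm (G i) \<in> psupp (G i))"
proof (induction "card M" arbitrary: M I F rule: less_induct)
  case less
  note hyps = less.hyps
  note prems = less.prems
  show ?case
  proof (cases "I = {}")
    case True thus ?thesis using prems by (intro exI[of _ F]) simp
  next
    case False
    then obtain i0 where "i0 \<in> I" by blast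
    then have "psupp (F i0) \<noteq> {}" by (rule indep_nonzero[OF prems(3) _ prems(2)])
    then have "M \<noteq> {}" using prems \<open>i0 \<in> I\<close> by blast
    then obtain u where u: "u \<in> M" "\<forall>b\<in>M. b \<noteq> u \<longrightarrow> lex_less b u"
      using lex_max_exists[OF prems(1) \<open>M \<noteq> {}\<close>] by blast
    have cardlt: "card (M - {u}) < card M" using u(1) prems(1) by (rule card_Diff1_less[rotated])
    show ?thesis
    proof (cases "\<exists>k\<in>I. F k u \<noteq> 0")
      case False
      have "\<forall>i\<in>I. psupp (F i) \<subseteq> M - {u}" using False prems(4) unfolding psupp_def by auto
      then obtain G where G: "indepI I G" "\<forall>i\<in>I. psupp (G i) \<subseteq> M - {u}" "\<forall>i\<in>I. G i \<in> spn I F"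
        "\<forall>i\<in>I. F i \<in> spn I G" "inj_on (\<lambda>i. lm (G i)) I" "\<forall>i\<in>I. lm (G i) \<in> psupp (G i)"
        using hyps[OF cardlt _ prems(2,3) \<open>\<forall>i\<in>I. psupp (F i) \<subseteq> M - {u}\<close>] prems(1) by blast
      show ?thesis using G by (intro exI[of _ G]) blast
    next
      case True
      then obtain k where k: "k \<in> I" "F k u \<noteq> 0" by blast
      define F' where "F' = (\<lambda>i a. F i a - (F i u / F k u) * F k a)"
      have F'u: "F' i u = 0" for i unfolding F'_def using k(2) by simp
      have supp': "\<forall>i\<in>I-{k}. psupp (F' i) \<subseteq> M - {u}"
      proof (intro ballI subsetI)
        fix i a assume i: "i \<in> I - {k}" and a: "a \<in> psupp (F' i)"
        then have "F' i a \<noteq> 0" unfolding psupp_def by simp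
        then have "a \<noteq> u" using F'u by auto
        moreover have "F i a \<noteq> 0 \<or> F k a \<noteq> 0" using \<open>F' i a \<noteq> 0\<close> unfolding F'_def by auto
        then have "a \<in> M" using prems(4) i k(1) unfolding psupp_def by blast
        ultimately show "a \<in> M - {u}" by simp
      qed
      have ind': "indepI (I - {k}) F'"
        unfolding indepI_def
      proof (intro allI impI)
        fix c assume eq: "(\<lambda>a. \<Sum>i\<in>I - {k}. c i * F' i a) = (\<lambda>_. 0)"
        define s where "s = (\<Sum>j\<in>I-{k}. c j * (F j u / F k u))"
        define c' where "c' = (\<lambda>i. if i = k then - s else c i)"
        have "(\<lambda>a. \<Sum>i\<in>I. c' i * F i a) = (\<lambda>_. 0)"
        proof
          fix a
          have "(\<Sum>i\<in>I. c' i * F i a) = c' k * F k a + (\<Sum>i\<in>I-{k}. c' i * F i a)"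
            using k(1) prems(2) by (simp add: sum.remove)
          also have "(\<Sum>i\<in>I-{k}. c' i * F i a) = (\<Sum>i\<in>I-{k}. c i * F i a)"
            unfolding c'_def by (rule sum.cong) auto
          also have "c' k = - s" unfolding c'_def by simp
          also have "(\<Sum>i\<in>I-{k}. c i * F i a) = (\<Sum>i\<in>I - {k}. c i * F' i a) + s * F k a"
          proof -
            have "(\<Sum>i\<in>I - {k}. c i * F' i a) = (\<Sum>i\<in>I - {k}. c i * F i a - c i * (F i u / F k u) * F k a)"
              unfolding F'_def by (rule sum.cong) (simp_all add: right_diff_distrib mult.assoc)
            also have "\<dots> = (\<Sum>i\<in>I - {k}. c i * F i a) - (\<Sum>i\<in>I - {k}. c i * (F i u / F k u) * F k a)"
              by (rule sum_subtractf)
            also have "(\<Sum>i\<in>I - {k}. c i * (F i u / F k u) * F k a) = s * F k a"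
              unfolding s_def by (rule sum_distrib_right[symmetric])
            finally show ?thesis by simp
          qed
          also have "(\<Sum>i\<in>I - {k}. c i * F' i a) = 0" using fun_cong[OF eq, of a] by simp
          finally show "(\<Sum>i\<in>I. c' i * F i a) = 0" by simp
        qed
        then have "\<forall>i\<in>I. c' i = 0" using prems(3) unfolding indepI_def by blast
        show "\<forall>i\<in>I - {k}. c i = 0"
        proof
          fix i assume "i \<in> I - {k}"
          then have "c' i = 0" "i \<noteq> k" using \<open>\<forall>i\<in>I. c' i = 0\<close> by auto
          thus "c i = 0" unfolding c'_def by simp
        qed
      qed
      have cardlt': "card (M - {u}) < card M" by (rule cardlt)
      obtain G' where G': "indepI (I-{k}) G'" "\<forall>i\<in>I-{k}. psupp (G' i) \<subseteq> M - {u}"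
        "\<forall>i\<in>I-{k}. G' i \<in> spn (I-{k}) F'"
        "\<forall>i\<in>I-{k}. F' i \<in> spn (I-{k}) G'" "inj_on (\<lambda>i. lm (G' i)) (I-{k})"
        "\<forall>i\<in>I-{k}. lm (G' i) \<in> psupp (G' i)"
        using hyps[OF cardlt' _ _ ind' supp'] prems(1,2) by blast
      define G where "G = (\<lambda>i. if i = k then F k else G' i)"
      have G'u: "G' i u = 0" if "i \<in> I - {k}" for i
        using G'(2) that unfolding psupp_def by blast
      have indG: "indepI I G"
        unfolding indepI_def
      proof (intro allI impI)
        fix c assume eq: "(\<lambda>a. \<Sum>i\<in>I. c i * G i a) = (\<lambda>_. 0)"
        have split: "(\<Sum>i\<in>I. c i * G i a) = c k * F k a + (\<Sum>i\<in>I-{k}. c i * G' i a)" for a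
        proof -
          have "(\<Sum>i\<in>I. c i * G i a) = c k * G k a + (\<Sum>i\<in>I-{k}. c i * G i a)"
            using k(1) prems(2) by (simp add: sum.remove)
          also have "(\<Sum>i\<in>I-{k}. c i * G i a) = (\<Sum>i\<in>I-{k}. c i * G' i a)"
            unfolding G_def by (rule sum.cong) auto
          finally show ?thesis unfolding G_def by simp
        qed
        have "(\<Sum>i\<in>I-{k}. c i * G' i u) = 0"
          by (rule sum.neutral) (simp add: G'u)
        then have "c k * F k u = 0" using split[of u] fun_cong[OF eq, of u] by simp
        then have ck: "c k = 0" using k(2) by simp
        have "(\<lambda>a. \<Sum>i\<in>I-{k}. c i * G' i a) = (\<lambda>_. 0)"
        proof
          fix a show "(\<Sum>i\<in>I-{k}. c i * G' i a) = 0" using split[of a] fun_cong[OF eq, of a] ck by simp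
        qed
        then have "\<forall>i\<in>I-{k}. c i = 0" using G'(1) unfolding indepI_def by blast
        thus "\<forall>i\<in>I. c i = 0" using ck by blast
      qed
      have suppG: "\<forall>i\<in>I. psupp (G i) \<subseteq> M"
        using G'(2) prems(4) unfolding G_def by auto
      have F'sp: "\<forall>j\<in>I-{k}. F' j \<in> spn I F"
      proof
        fix j assume j: "j \<in> I - {k}"
        have "(\<lambda>a. F j a + (- (F j u / F k u)) * F k a) \<in> spn I F"
          using j k(1) prems(2) by (intro spn_add spn_smult spn_base) auto
        thus "F' j \<in> spn I F" unfolding F'_def by simp
      qed
      have GspF: "\<forall>i\<in>I. G i \<in> spn I F"
      proof
        fix i assume i: "i \<in> I"
        show "G i \<in> spn I F"
        proof (cases "i = k")
          case True thus ?thesis unfolding G_def using spn_base[OF k(1) prems(2), of F] by simp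
        next
          case False
          then have "G' i \<in> spn I F" using spn_trans[of "I-{k}" F' I F "G' i"] G'(3) F'sp i prems(2) by blast
          thus ?thesis unfolding G_def using False by simp
        qed
      qed
      have G'sp: "\<forall>j\<in>I-{k}. G' j \<in> spn I G"
      proof
        fix j assume j: "j \<in> I - {k}"
        then have "G j \<in> spn I G" using spn_base[OF _ prems(2), of j G] by blast
        thus "G' j \<in> spn I G" unfolding G_def using j by simp
      qed
      have FspG: "\<forall>i\<in>I. F i \<in> spn I G"
      proof
        fix i assume i: "i \<in> I"
        have Fk: "F k \<in> spn I G"
        proof -
          have "G k \<in> spn I G" using spn_base[OF k(1) prems(2), of G] .
          thus ?thesis unfolding G_def by simp
        qed
        show "F i \<in> spn I G"
        proof (cases "i = k")
          case True thus ?thesis using Fk by simp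
        next
          case False
          then have "F' i \<in> spn I G" using spn_trans[of "I-{k}" G' I G "F' i"] G'(4) G'sp i prems(2) by blast
          then have "(\<lambda>a. F' i a + (F i u / F k u) * F k a) \<in> spn I G"
            using Fk by (intro spn_add spn_smult)
          moreover have "(\<lambda>a. F' i a + (F i u / F k u) * F k a) = F i"
            unfolding F'_def by simp
          ultimately show ?thesis by simp
        qed
      qed
      have lmk: "lm (G k) = u"
      proof -
        have "u \<in> psupp (F k)" using k(2) unfolding psupp_def by simp
        moreover have "\<forall>b\<in>psupp (F k). b \<noteq> u \<longrightarrow> lex_less b u" using u(2) prems(4) k(1) by blast
        ultimately show ?thesis unfolding G_def using lm_eq by simp
      qed
      have lmo: "\<forall>i\<in>I-{k}. lm (G i) \<in> psupp (G i) \<and> lm (G i) \<noteq> u"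
        using G'(2,6) unfolding G_def by auto
      have inj: "inj_on (\<lambda>i. lm (G i)) I"
      proof -
        have "inj_on (\<lambda>i. lm (G i)) (I - {k})"
          using G'(5) unfolding G_def inj_on_def by simp
        moreover have "lm (G k) \<notin> (\<lambda>i. lm (G i)) ` ((I - {k}) - {k})" using lmk lmo by auto
        ultimately have "inj_on (\<lambda>i. lm (G i)) (insert k (I - {k}))" by (simp only: inj_on_insert) blast
        moreover have "insert k (I - {k}) = I" using k(1) by blast
        ultimately show ?thesis by simp
      qed
      have lmin: "\<forall>i\<in>I. lm (G i) \<in> psupp (G i)"
        using lmo lmk k(2) unfolding G_def psupp_def by auto
      show ?thesis using indG suppG GspF FspG inj lmin by blast
    qed
  qed
qed

lemma indep_card_le:
  fixes F :: "'i \<Rightarrow> 'a::field mpoly"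
  assumes "finite M" "finite I" "indepI I F" "\<forall>i\<in>I. psupp (F i) \<subseteq> M"
  shows "card I \<le> card M"
proof -
  obtain G where G0: "indepI I G \<and> (\<forall>i\<in>I. psupp (G i) \<subseteq> M) \<and> (\<forall>i\<in>I. G i \<in> spn I F) \<and> (\<forall>i\<in>I. F i \<in> spn I G)
      \<and> inj_on (\<lambda>i. lm (G i)) I \<and> (\<forall>i\<in>I. lm (G i) \<in> psupp (G i))"
    using echelon[OF assms] by (rule exE)
  have G: "\<forall>i\<in>I. psupp (G i) \<subseteq> M" "inj_on (\<lambda>i. lm (G i)) I" "\<forall>i\<in>I. lm (G i) \<in> psupp (G i)"
    using G0 by simp_all
  have "card I = card ((\<lambda>i. lm (G i)) ` I)" using G(2) by (simp add: card_image)
  also have "\<dots> \<le> card M" using G(1,3) assms(1) by (intro card_mono) auto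
  finally show ?thesis .
qed



definition monev :: "nat \<Rightarrow> (nat \<Rightarrow> nat) \<Rightarrow> (nat \<Rightarrow> 'a::comm_ring_1) \<Rightarrow> 'a" where
  "monev m a x = (\<Prod>i\<le>m. x i ^ a i)"

lemma lin_indep_eq: "lin_indep_fam r F = indepI {..<r} F"
  unfolding lin_indep_fam_def indepI_def by auto

lemma finite_Mbar: "finite (Mbar q m d)"
proof -
  have "Mbar q m d \<subseteq> {a. \<forall>x. (x \<in> {..m} \<longrightarrow> a x \<in> {..d}) \<and> (x \<notin> {..m} \<longrightarrow> a x = 0)}"
  proof
    fix a assume "a \<in> Mbar q m d"
    then have a: "a \<in> mons m" "mdeg m a = d" unfolding Mbar_def proj_reduced_mon_def by auto
    have "a x \<le> d" if "x \<le> m" for x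
    proof -
      have "a x \<le> (\<Sum>i\<le>m. a i)" using that by (intro member_le_sum) auto
      thus ?thesis using a(2) unfolding mdeg_def by simp
    qed
    thus "a \<in> {a. \<forall>x. (x \<in> {..m} \<longrightarrow> a x \<in> {..d}) \<and> (x \<notin> {..m} \<longrightarrow> a x = 0)}"
      using a(1) unfolding mons_def by auto
  qed
  moreover have "finite {a. \<forall>x. (x \<in> {..m} \<longrightarrow> a x \<in> {..d}) \<and> (x \<notin> {..m} \<longrightarrow> a x = (0::nat))}"
    by (rule finite_set_of_finite_funs) auto
  ultimately show ?thesis by (rule finite_subset)
qed

lemma peval_superset:
  fixes H :: "'a::field mpoly"
  assumes "finite M" "psupp H \<subseteq> M"
  shows "peval m H x = (\<Sum>a\<in>M. H a * monev m a x)"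
  unfolding peval_def monev_def
proof (rule sum.mono_neutral_left[OF assms(1) assms(2)])
  show "\<forall>i\<in>M - psupp H. H i * (\<Prod>j\<le>m. x j ^ i j) = 0" unfolding psupp_def by simp
qed

lemma peval_lc:
  fixes F :: "'i \<Rightarrow> 'a::field mpoly"
  assumes "finite M" "finite I" "\<forall>i\<in>I. psupp (F i) \<subseteq> M"
  shows "peval m (\<lambda>a. \<Sum>i\<in>I. c i * F i a) x = (\<Sum>i\<in>I. c i * peval m (F i) x)"
proof -
  have "peval m (\<lambda>a. \<Sum>i\<in>I. c i * F i a) x = (\<Sum>a\<in>M. (\<Sum>i\<in>I. c i * F i a) * monev m a x)"
    by (rule peval_superset[OF assms(1) psupp_lc[OF assms(3)]])
  also have "\<dots> = (\<Sum>a\<in>M. \<Sum>i\<in>I. c i * (F i a * monev m a x))"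
    by (simp add: sum_distrib_right mult.assoc)
  also have "\<dots> = (\<Sum>i\<in>I. \<Sum>a\<in>M. c i * (F i a * monev m a x))"
    by (rule sum.swap)
  also have "\<dots> = (\<Sum>i\<in>I. c i * peval m (F i) x)"
  proof (rule sum.cong[OF refl])
    fix i assume "i \<in> I"
    then have "peval m (F i) x = (\<Sum>a\<in>M. F i a * monev m a x)"
      using peval_superset[OF assms(1)] assms(3) by blast
    thus "(\<Sum>a\<in>M. c i * (F i a * monev m a x)) = c i * peval m (F i) x"
      by (simp add: sum_distrib_left)
  qed
  finally show ?thesis .
qed

lemma zero_spn:
  fixes F :: "'i \<Rightarrow> 'a::field mpoly"
  assumes "finite M" "finite I" "\<forall>i\<in>I. psupp (F i) \<subseteq> M" "H \<in> spn I F" "\<forall>i\<in>I. peval m (F i) x = 0"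
  shows "peval m H x = 0"
proof -
  obtain c where c: "H = (\<lambda>a. \<Sum>i\<in>I. c i * F i a)" using assms(4) unfolding spn_def by blast
  show ?thesis unfolding c peval_lc[OF assms(1-3)] using assms(5) by simp
qed

lemma zero_set_sub:
  fixes F G :: "nat \<Rightarrow> 'a::field mpoly"
  assumes "finite M" "\<forall>i<r. psupp (F i) \<subseteq> M" "\<forall>i<r. G i \<in> spn {..<r} F"
  shows "zero_set m r F \<subseteq> zero_set m r G"
  unfolding zero_set_def
proof (intro subsetI CollectI conjI)
  fix P assume P: "P \<in> {P \<in> proj_space TYPE('a) m. \<forall>x\<in>P. \<forall>i<r. peval m (F i) x = 0}"
  thus "P \<in> proj_space TYPE('a) m" by simp
  show "\<forall>x\<in>P. \<forall>i<r. peval m (G i) x = 0"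
  proof (intro ballI allI impI)
    fix x i assume "x \<in> P" "i < r"
    then have "\<forall>j\<in>{..<r}. peval m (F j) x = 0" using P by simp
    moreover have "\<forall>j\<in>{..<r}. psupp (F j) \<subseteq> M" using assms(2) by simp
    ultimately show "peval m (G i) x = 0"
      using zero_spn[OF assms(1) finite_lessThan] assms(3) \<open>i < r\<close> by blast
  qed
qed

lemma part1_sets:
  "{card (zero_set m r F) | F :: nat \<Rightarrow> 'a::{finite,field} mpoly.
      lin_indep_fam r F \<and> (\<forall>i<r. pr_hom CARD('a) m d (F i))}
   = {card (zero_set m r F) | F :: nat \<Rightarrow> 'a mpoly.
      lin_indep_fam r F \<and> (\<forall>i<r. pr_hom CARD('a) m d (F i)) \<and> inj_on (\<lambda>i. lm (F i)) {..<r}}"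
  (is "?L = ?R")
proof
  show "?R \<subseteq> ?L" by blast
  show "?L \<subseteq> ?R"
  proof
    fix n assume "n \<in> ?L"
    then obtain F :: "nat \<Rightarrow> 'a mpoly" where F: "n = card (zero_set m r F)" "lin_indep_fam r F"
      "\<forall>i<r. pr_hom CARD('a) m d (F i)" by blast
    let ?M = "Mbar CARD('a) m d"
    have sF: "\<forall>i\<in>{..<r}. psupp (F i) \<subseteq> ?M" using F(3) unfolding pr_hom_def by simp
    obtain G where G0: "indepI {..<r} G \<and> (\<forall>i\<in>{..<r}. psupp (G i) \<subseteq> ?M) \<and> (\<forall>i\<in>{..<r}. G i \<in> spn {..<r} F)
      \<and> (\<forall>i\<in>{..<r}. F i \<in> spn {..<r} G)
      \<and> inj_on (\<lambda>i. lm (G i)) {..<r} \<and> (\<forall>i\<in>{..<r}. lm (G i) \<in> psupp (G i))"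
      using echelon[OF finite_Mbar finite_lessThan F(2)[unfolded lin_indep_eq] sF] by (rule exE)
    have G: "indepI {..<r} G" "\<forall>i<r. psupp (G i) \<subseteq> ?M" "\<forall>i<r. G i \<in> spn {..<r} F"
      "\<forall>i<r. F i \<in> spn {..<r} G" "inj_on (\<lambda>i. lm (G i)) {..<r}" using G0 by simp_all
    have "zero_set m r F \<subseteq> zero_set m r G"
      using zero_set_sub[OF finite_Mbar _ G(3)] F(3) unfolding pr_hom_def by blast
    moreover have "zero_set m r G \<subseteq> zero_set m r F"
      using zero_set_sub[OF finite_Mbar G(2) G(4)] .
    ultimately have "n = card (zero_set m r G)" using F(1) by simp
    moreover have "lin_indep_fam r G" using G(1) lin_indep_eq by blast
    moreover have "\<forall>i<r. pr_hom CARD('a) m d (G i)" using G(2) unfolding pr_hom_def by blast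
    ultimately show "n \<in> ?R" using G(5) by blast
  qed
qed



lemma card_field_ge2: "CARD('a::{finite,field}) \<ge> 2"
proof -
  have "card {0::'a, 1} \<le> CARD('a)" by (rule card_mono) auto
  thus ?thesis by simp
qed

lemma field_pow_card: "(x::'a::{finite,field}) ^ CARD('a) = x"
proof (cases "x = 0")
  case True thus ?thesis using card_field_ge2[where 'a='a] by simp
next
  case False
  let ?N = "UNIV - {0::'a}"
  have bij: "bij_betw (\<lambda>y. x * y) ?N ?N"
    unfolding bij_betw_def
  proof
    show "inj_on ((*) x) ?N" using False by (auto simp: inj_on_def)
    show "(*) x ` ?N = ?N"
    proof
      show "(*) x ` ?N \<subseteq> ?N" using False by auto
      show "?N \<subseteq> (*) x ` ?N"
      proof
        fix y assume "y \<in> ?N"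
        then have "y = x * (y / x)" "y / x \<in> ?N" using False by auto
        thus "y \<in> (*) x ` ?N" by blast
      qed
    qed
  qed
  have "(\<Prod>y\<in>?N. x * y) = (\<Prod>y\<in>?N. y)"
    using prod.reindex_bij_betw[OF bij, of "\<lambda>y. y"] by simp
  moreover have "(\<Prod>y\<in>?N. x * y) = x ^ card ?N * (\<Prod>y\<in>?N. y)"
    by (simp add: prod.distrib)
  moreover have "(\<Prod>y\<in>?N. y) \<noteq> 0" by simp
  ultimately have "x ^ card ?N = 1" by simp
  moreover have "card ?N = CARD('a) - 1" by (simp add: card_Diff_subset)
  ultimately have "x ^ (CARD('a) - 1) = 1" by simp
  then have "x ^ (CARD('a) - 1) * x = x" by simp
  moreover have "CARD('a) - 1 + 1 = CARD('a)" using card_field_ge2[where 'a='a] by simp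
  ultimately show ?thesis by (metis power_add power_one_right)
qed

lemma field_pow_shift: "(x::'a::{finite,field}) ^ (n + CARD('a)) = x ^ (n + 1)"
  by (simp add: power_add field_pow_card)

definition pclass :: "(nat \<Rightarrow> 'a::field) \<Rightarrow> (nat \<Rightarrow> 'a) set" where
  "pclass z = {y. \<exists>c. c \<noteq> 0 \<and> y = (\<lambda>i. c * z i)}"

lemma proj_space_iff:
  "P \<in> proj_space TYPE('a::field) m \<longleftrightarrow> (\<exists>a::nat\<Rightarrow>'a. (\<forall>i>m. a i = 0) \<and> a \<noteq> (\<lambda>_. 0) \<and> P = pclass a)"
  unfolding proj_space_def quotient_def pclass_def by auto

lemma pclass_self: "z \<in> pclass z"
  unfolding pclass_def by (rule CollectI, rule exI[of _ 1]) simp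

lemma pclass_eq: assumes "z \<in> pclass a" shows "pclass z = pclass a"
proof -
  obtain c where c: "c \<noteq> 0" "z = (\<lambda>i. c * a i)" using assms unfolding pclass_def by blast
  show ?thesis
  proof
    show "pclass z \<subseteq> pclass a"
    proof
      fix y assume "y \<in> pclass z"
      then obtain t where "t \<noteq> 0" "y = (\<lambda>i. t * z i)" unfolding pclass_def by blast
      then have "t * c \<noteq> 0" "y = (\<lambda>i. (t * c) * a i)" using c by (auto simp: mult.assoc)
      thus "y \<in> pclass a" unfolding pclass_def by blast
    qed
    show "pclass a \<subseteq> pclass z"
    proof
      fix y assume "y \<in> pclass a"
      then obtain t where "t \<noteq> 0" "y = (\<lambda>i. t * a i)" unfolding pclass_def by blast
      then have "t / c \<noteq> 0" "y = (\<lambda>i. (t / c) * z i)" using c by auto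
      thus "y \<in> pclass z" unfolding pclass_def by blast
    qed
  qed
qed

lemma proj_mem:
  assumes "P \<in> proj_space TYPE('a::field) m" "z \<in> P"
  shows "P = pclass z" "z \<noteq> (\<lambda>_. 0)" "\<forall>i>m. z i = 0"
proof -
  obtain a :: "nat \<Rightarrow> 'a" where a: "\<forall>i>m. a i = 0" "a \<noteq> (\<lambda>_. 0)" "P = pclass a"
    using assms(1) proj_space_iff by blast
  show "P = pclass z" using pclass_eq assms(2) a(3) by blast
  obtain c where c: "c \<noteq> 0" "z = (\<lambda>i. c * a i)" using assms(2) a(3) unfolding pclass_def by blast
  show "z \<noteq> (\<lambda>_. 0)"
  proof
    assume "z = (\<lambda>_. 0)"
    then have "\<forall>i. c * a i = 0" using c(2) by metis
    then have "a = (\<lambda>_. 0)" using c(1) by auto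
    thus False using a(2) by simp
  qed
  show "\<forall>i>m. z i = 0" using a(1) c(2) by simp
qed

lemma proj_nonempty: "P \<in> proj_space TYPE('a::field) m \<Longrightarrow> \<exists>z. z \<in> P"
  using proj_space_iff pclass_self by metis

lemma finite_proj_space: "finite (proj_space TYPE('a::{finite,field}) m)"
proof -
  let ?A = "{x :: nat \<Rightarrow> 'a. (\<forall>i>m. x i = 0) \<and> x \<noteq> (\<lambda>_. 0)}"
  have "?A \<subseteq> {x. \<forall>i. (i \<in> {..m} \<longrightarrow> x i \<in> UNIV) \<and> (i \<notin> {..m} \<longrightarrow> x i = 0)}" by auto
  moreover have "finite {x :: nat \<Rightarrow> 'a. \<forall>i. (i \<in> {..m} \<longrightarrow> x i \<in> UNIV) \<and> (i \<notin> {..m} \<longrightarrow> x i = 0)}"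
    by (rule finite_set_of_finite_funs) auto
  ultimately have "finite ?A" by (rule finite_subset)
  thus ?thesis unfolding proj_space_def quotient_def by simp
qed

definition lspan :: "nat \<Rightarrow> (nat \<Rightarrow> 'a::field) set \<Rightarrow> (nat \<Rightarrow> nat) set \<Rightarrow> ((nat \<Rightarrow> 'a) \<Rightarrow> 'a) \<Rightarrow> bool" where
  "lspan m X D f \<longleftrightarrow> (\<exists>c. \<forall>x\<in>X. f x = (\<Sum>\<mu>\<in>D. c \<mu> * monev m \<mu> x))"

lemma lspan_cong: "lspan m X D f \<Longrightarrow> (\<forall>x\<in>X. f x = g x) \<Longrightarrow> lspan m X D g"
  unfolding lspan_def by metis

lemma lspan_zero: "lspan m X D (\<lambda>_. 0)"
  unfolding lspan_def by (rule exI[of _ "\<lambda>_. 0"]) simp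

lemma lspan_add: "lspan m X D f \<Longrightarrow> lspan m X D g \<Longrightarrow> lspan m X D (\<lambda>x. f x + g x)"
  unfolding lspan_def
proof (elim exE)
  fix c1 c2 assume "\<forall>x\<in>X. f x = (\<Sum>\<mu>\<in>D. c1 \<mu> * monev m \<mu> x)" "\<forall>x\<in>X. g x = (\<Sum>\<mu>\<in>D. c2 \<mu> * monev m \<mu> x)"
  thus "\<exists>c. \<forall>x\<in>X. f x + g x = (\<Sum>\<mu>\<in>D. c \<mu> * monev m \<mu> x)"
    by (intro exI[of _ "\<lambda>\<mu>. c1 \<mu> + c2 \<mu>"]) (simp add: sum.distrib distrib_right)
qed

lemma lspan_smult: "lspan m X D f \<Longrightarrow> lspan m X D (\<lambda>x. t * f x)"
  unfolding lspan_def
proof (elim exE)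
  fix c assume "\<forall>x\<in>X. f x = (\<Sum>\<mu>\<in>D. c \<mu> * monev m \<mu> x)"
  thus "\<exists>c. \<forall>x\<in>X. t * f x = (\<Sum>\<mu>\<in>D. c \<mu> * monev m \<mu> x)"
    by (intro exI[of _ "\<lambda>\<mu>. t * c \<mu>"]) (simp add: sum_distrib_left mult.assoc)
qed

lemma lspan_sum: "finite N \<Longrightarrow> \<forall>\<nu>\<in>N. lspan m X D (g \<nu>) \<Longrightarrow> lspan m X D (\<lambda>x. \<Sum>\<nu>\<in>N. t \<nu> * g \<nu> x)"
proof (induction N rule: finite_induct)
  case empty thus ?case using lspan_zero by simp
next
  case (insert a N)
  have "lspan m X D (\<lambda>x. t a * g a x + (\<Sum>\<nu>\<in>N. t \<nu> * g \<nu> x))"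
    using insert by (intro lspan_add lspan_smult) auto
  thus ?case using insert by simp
qed

lemma lspan_base: "\<mu> \<in> D \<Longrightarrow> finite D \<Longrightarrow> lspan m X D (monev m \<mu>)"
  unfolding lspan_def
proof (rule exI[of _ "\<lambda>j. if j = \<mu> then 1 else 0"], intro ballI)
  fix x assume "\<mu> \<in> D" "finite D"
  thus "monev m \<mu> x = (\<Sum>j\<in>D. (if j = \<mu> then 1 else 0) * monev m j x)"
    using delta_sum[of D \<mu> "\<lambda>j. monev m j x"] by simp
qed

lemma lspan_trans:
  assumes "finite D" "lspan m X D f" "\<forall>\<mu>\<in>D. lspan m X D' (monev m \<mu>)"
  shows "lspan m X D' f"
proof -
  obtain c where c: "\<forall>x\<in>X. f x = (\<Sum>\<mu>\<in>D. c \<mu> * monev m \<mu> x)" using assms(2) unfolding lspan_def by blast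
  have "lspan m X D' (\<lambda>x. \<Sum>\<mu>\<in>D. c \<mu> * monev m \<mu> x)"
    by (rule lspan_sum[OF assms(1) assms(3)])
  thus ?thesis using c lspan_cong by fastforce
qed



definition allD :: "nat \<Rightarrow> nat \<Rightarrow> (nat \<Rightarrow> nat) set" where
  "allD m e = {\<nu>. \<nu> \<in> mons m \<and> mdeg m \<nu> = e}"

lemma finite_allD: "finite (allD m e)"
proof -
  have "allD m e \<subseteq> {a. \<forall>x. (x \<in> {..m} \<longrightarrow> a x \<in> {..e}) \<and> (x \<notin> {..m} \<longrightarrow> a x = 0)}"
  proof
    fix a assume "a \<in> allD m e"
    then have a: "a \<in> mons m" "mdeg m a = e" unfolding allD_def by auto
    have "a x \<le> e" if "x \<le> m" for x
    proof -
      have "a x \<le> (\<Sum>i\<le>m. a i)" using that by (intro member_le_sum) auto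
      thus ?thesis using a(2) unfolding mdeg_def by simp
    qed
    thus "a \<in> {a. \<forall>x. (x \<in> {..m} \<longrightarrow> a x \<in> {..e}) \<and> (x \<notin> {..m} \<longrightarrow> a x = 0)}"
      using a(1) unfolding mons_def by auto
  qed
  moreover have "finite {a. \<forall>x. (x \<in> {..m} \<longrightarrow> a x \<in> {..e}) \<and> (x \<notin> {..m} \<longrightarrow> a x = (0::nat))}"
    by (rule finite_set_of_finite_funs) auto
  ultimately show ?thesis by (rule finite_subset)
qed

lemma mdeg_add: "mdeg m (a + b) = mdeg m a + mdeg m b"
  unfolding mdeg_def plus_fun_def by (simp add: sum.distrib)

lemma mons_add: "a \<in> mons m \<Longrightarrow> b \<in> mons m \<Longrightarrow> a + b \<in> mons m"
  unfolding mons_def plus_fun_def by simp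

lemma monev_add: "monev m (a + b) x = monev m a x * monev m b x"
  unfolding monev_def plus_fun_def by (simp add: power_add prod.distrib)

definition ev1 :: "nat \<Rightarrow> nat \<Rightarrow> nat" where "ev1 j = (\<lambda>i. if i = j then 1 else 0)"

lemma ev1_mons: "j \<le> m \<Longrightarrow> ev1 j \<in> mons m"
  unfolding ev1_def mons_def by auto

lemma ev1_mdeg: "j \<le> m \<Longrightarrow> mdeg m (ev1 j) = 1"
  unfolding ev1_def mdeg_def by simp

lemma ev1_monev: "j \<le> m \<Longrightarrow> monev m (ev1 j) x = x j"
proof -
  assume j: "j \<le> m"
  have "monev m (ev1 j) x = (\<Prod>i\<le>m. if i = j then x i else 1)"
    unfolding monev_def ev1_def by (rule prod.cong) auto
  also have "\<dots> = x j" using j by (simp add: prod.delta)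
  finally show ?thesis .
qed

lemma monev_zero: "monev m (\<lambda>_. 0) x = 1"
  unfolding monev_def by simp

lemma allD_zero: "allD m 0 = {\<lambda>_. 0}"
proof
  show "allD m 0 \<subseteq> {\<lambda>_. 0}"
  proof
    fix a assume "a \<in> allD m 0"
    then have a: "\<forall>i>m. a i = 0" "(\<Sum>i\<le>m. a i) = 0" unfolding allD_def mons_def mdeg_def by auto
    have "\<forall>i\<le>m. a i = 0" using a(2) by simp
    then have "a = (\<lambda>_. 0)" using a(1) by (metis le_less_linear)
    thus "a \<in> {\<lambda>_. 0}" by simp
  qed
  show "{\<lambda>_. 0} \<subseteq> allD m 0" unfolding allD_def mons_def mdeg_def by simp
qed

lemma inS_const: "lspan m X (allD m 0) (\<lambda>x. t)"
  unfolding lspan_def allD_zero by (rule exI[of _ "\<lambda>_. t"]) (simp add: monev_zero)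

lemma inS_var:
  assumes "lspan m X (allD m e) f" "j \<le> m"
  shows "lspan m X (allD m (Suc e)) (\<lambda>x. x j * f x)"
proof -
  obtain c where c: "\<forall>x\<in>X. f x = (\<Sum>\<nu>\<in>allD m e. c \<nu> * monev m \<nu> x)" using assms(1) unfolding lspan_def by blast
  define sh where "sh = (\<lambda>\<nu>::nat\<Rightarrow>nat. \<nu> + ev1 j)"
  have inj: "inj_on sh (allD m e)" unfolding sh_def inj_on_def plus_fun_def
  proof (intro ballI impI)
    fix a b :: "nat \<Rightarrow> nat" assume "(\<lambda>x. a x + ev1 j x) = (\<lambda>x. b x + ev1 j x)"
    then have "\<forall>x. a x = b x" by (metis add_right_cancel)
    thus "a = b" by auto
  qed
  have img: "sh ` allD m e \<subseteq> allD m (Suc e)"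
    unfolding sh_def allD_def using mons_add ev1_mons[OF assms(2)] mdeg_add ev1_mdeg[OF assms(2)] by auto
  define c' where "c' = (\<lambda>\<nu>. if \<nu> \<in> sh ` allD m e then c (\<nu> - ev1 j) else 0)"
  have shinv: "sh \<nu> - ev1 j = \<nu>" for \<nu> unfolding sh_def plus_fun_def fun_diff_def by simp
  show ?thesis unfolding lspan_def
  proof (rule exI[of _ c'], intro ballI)
    fix x assume x: "x \<in> X"
    have "(\<Sum>\<nu>\<in>allD m (Suc e). c' \<nu> * monev m \<nu> x) = (\<Sum>\<nu>\<in>sh ` allD m e. c' \<nu> * monev m \<nu> x)"
      by (rule sum.mono_neutral_right[OF finite_allD img]) (simp add: c'_def)
    also have "\<dots> = (\<Sum>\<nu>\<in>allD m e. c' (sh \<nu>) * monev m (sh \<nu>) x)"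
      by (rule sum.reindex[OF inj, unfolded comp_def])
    also have "\<dots> = (\<Sum>\<nu>\<in>allD m e. x j * (c \<nu> * monev m \<nu> x))"
    proof (rule sum.cong[OF refl])
      fix \<nu> assume "\<nu> \<in> allD m e"
      then have "c' (sh \<nu>) = c \<nu>" unfolding c'_def using shinv by simp
      moreover have "monev m (sh \<nu>) x = monev m \<nu> x * x j"
        unfolding sh_def monev_add ev1_monev[OF assms(2)] ..
      ultimately show "c' (sh \<nu>) * monev m (sh \<nu>) x = x j * (c \<nu> * monev m \<nu> x)" by simp
    qed
    also have "\<dots> = x j * f x" using c x by (simp add: sum_distrib_left)
    finally show "x j * f x = (\<Sum>\<nu>\<in>allD m (Suc e). c' \<nu> * monev m \<nu> x)" by simp
  qed
qed

lemma inS_lin2: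
  assumes "lspan m X (allD m e) f" "j \<le> m" "k \<le> m"
  shows "lspan m X (allD m (Suc e)) (\<lambda>x. (a * x j - b * x k) * f x)"
proof -
  have "lspan m X (allD m (Suc e)) (\<lambda>x. a * (x j * f x) + (- b) * (x k * f x))"
    using assms by (intro lspan_add lspan_smult inS_var)
  thus ?thesis by (rule lspan_cong) (simp add: algebra_simps)
qed

lemma inS_prod:
  assumes "finite T" "lspan m X (allD m e) f" "\<forall>Q\<in>T. j Q \<le> m \<and> k Q \<le> m"
  shows "lspan m X (allD m (e + card T)) (\<lambda>x. (\<Prod>Q\<in>T. (a Q * x (j Q) - b Q * x (k Q))) * f x)"
  using assms
proof (induction T rule: finite_induct)
  case empty thus ?case by simp
next
  case (insert Q T)
  have "lspan m X (allD m (Suc (e + card T)))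
        (\<lambda>x. (a Q * x (j Q) - b Q * x (k Q)) * ((\<Prod>Q\<in>T. (a Q * x (j Q) - b Q * x (k Q))) * f x))"
    using insert by (intro inS_lin2) auto
  moreover have "e + card (insert Q T) = Suc (e + card T)" using insert by simp
  ultimately show ?case using insert by (simp add: mult.assoc)
qed

lemma inS_pow: "j \<le> m \<Longrightarrow> lspan m X (allD m k) (\<lambda>x. x j ^ k)"
proof (induction k)
  case 0 thus ?case using inS_const[of m X 1] by simp
next
  case (Suc k)
  then have "lspan m X (allD m (Suc k)) (\<lambda>x. x j * x j ^ k)" by (intro inS_var)
  thus ?case by simp
qed



lemma mdeg_bump:
  assumes "i \<noteq> k" "i \<le> m" "k \<le> m"
  shows "mdeg m (\<lambda>j. if j = i then w i + s else if j = k then w k + t else w j) = mdeg m w + s + t"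
proof -
  have "mdeg m (\<lambda>j. if j = i then w i + s else if j = k then w k + t else w j)
        = (\<Sum>j\<le>m. w j + (if j = i then s else 0) + (if j = k then t else 0))"
    unfolding mdeg_def using assms(1) by (intro sum.cong) auto
  also have "\<dots> = (\<Sum>j\<le>m. w j) + (\<Sum>j\<le>m. (if j = i then s else 0)) + (\<Sum>j\<le>m. (if j = k then t else 0))"
    by (simp add: sum.distrib)
  also have "\<dots> = mdeg m w + s + t" using assms(2,3) unfolding mdeg_def by simp
  finally show ?thesis .
qed

lemma reduction:
  fixes G :: "nat \<Rightarrow> 'a::{finite,field} mpoly" and X :: "(nat \<Rightarrow> 'a) set"
  assumes hG: "\<forall>i<r. psupp (G i) \<subseteq> Mbar CARD('a) m d" "\<forall>i<r. psupp (G i) \<noteq> {}"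
    and hX: "\<forall>x\<in>X. \<forall>i<r. peval m (G i) x = 0"
  shows "\<nu> \<in> allD m e \<Longrightarrow> lspan m X (Delta CARD('a) m e ((\<lambda>i. lm (G i)) ` {..<r})) (monev m \<nu>)"
proof (induction "card {b \<in> allD m e. lex_less b \<nu>}" arbitrary: \<nu> rule: less_induct)
  case less
  let ?q = "CARD('a)"
  let ?S = "(\<lambda>i. lm (G i)) ` {..<r}"
  let ?D = "Delta ?q m e ?S"
  have finD: "finite ?D"
    by (rule finite_subset[OF _ finite_Mbar[of ?q m e]]) (auto simp: Delta_def)
  have nu: "\<nu> \<in> mons m" "mdeg m \<nu> = e" using less.prems unfolding allD_def by auto
  have dec: "lspan m X ?D (monev m \<nu>')" if "\<nu>' \<in> allD m e" "lex_less \<nu>' \<nu>" for \<nu>'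
  proof -
    have sub: "{b \<in> allD m e. lex_less b \<nu>'} \<subset> {b \<in> allD m e. lex_less b \<nu>}"
    proof
      show "{b \<in> allD m e. lex_less b \<nu>'} \<subseteq> {b \<in> allD m e. lex_less b \<nu>}"
        using that(2) lex_trans by blast
      have "\<nu>' \<in> {b \<in> allD m e. lex_less b \<nu>}" using that by simp
      moreover have "\<nu>' \<notin> {b \<in> allD m e. lex_less b \<nu>'}" using lex_irrefl by simp
      ultimately show "{b \<in> allD m e. lex_less b \<nu>'} \<noteq> {b \<in> allD m e. lex_less b \<nu>}" by blast
    qed
    have "card {b \<in> allD m e. lex_less b \<nu>'} < card {b \<in> allD m e. lex_less b \<nu>}"
      by (rule psubset_card_mono[OF _ sub]) (rule finite_subset[OF _ finite_allD], blast)
    thus ?thesis using less.hyps that(1) by blast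
  qed
  show ?case
  proof (cases "\<nu> \<in> ?D")
    case True thus ?thesis by (rule lspan_base[OF _ finD])
  next
    case notD: False
    show ?thesis
    proof (cases "proj_reduced_mon ?q m \<nu>")
      case True
      then have "\<nu> \<in> Mbar ?q m e" using nu unfolding Mbar_def by simp
      then have "\<exists>b\<in>?S. mdvd b \<nu>" using notD unfolding Delta_def by blast
      then obtain l where l: "l < r" "mdvd (lm (G l)) \<nu>" by blast
      define g where "g = G l"
      define la where "la = lm g"
      have gsupp: "psupp g \<subseteq> Mbar ?q m d" "psupp g \<noteq> {}" using hG l(1) unfolding g_def by auto
      have gfin: "finite (psupp g)" using finite_subset[OF gsupp(1) finite_Mbar] .
      have la: "la \<in> psupp g" "\<forall>b\<in>psupp g. b \<noteq> la \<longrightarrow> lex_less b la"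
        using lm_in[OF gfin gsupp(2)] unfolding la_def by auto
      have gla: "g la \<noteq> 0" using la(1) unfolding psupp_def by simp
      define mu where "mu = (\<lambda>j. \<nu> j - la j)"
      have nu_eq: "\<nu> = mu + la" using l(2) unfolding mu_def mdvd_def la_def g_def plus_fun_def by auto
      have bM: "b \<in> mons m \<and> mdeg m b = d" if "b \<in> psupp g" for b
        using gsupp(1) that unfolding Mbar_def proj_reduced_mon_def by auto
      have mu_mons: "mu \<in> mons m" using nu(1) unfolding mons_def mu_def by auto
      have "mdeg m \<nu> = mdeg m mu + mdeg m la" unfolding nu_eq mdeg_add ..
      then have mudeg: "mdeg m mu + d = e" using nu(2) bM[OF la(1)] by simp
      have inD: "mu + b \<in> allD m e" if "b \<in> psupp g" for b
        unfolding allD_def using mons_add[OF mu_mons] bM[OF that] mdeg_add mudeg by auto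
      have eq: "monev m \<nu> x = (\<Sum>b\<in>psupp g - {la}. (- g b / g la) * monev m (mu + b) x)" if x: "x \<in> X" for x
      proof -
        have "peval m g x = 0" using hX x l(1) unfolding g_def by blast
        then have "(\<Sum>b\<in>psupp g. g b * monev m b x) = 0" unfolding peval_def monev_def .
        then have "monev m mu x * (\<Sum>b\<in>psupp g. g b * monev m b x) = 0" by simp
        then have "(\<Sum>b\<in>psupp g. g b * monev m (mu + b) x) = 0"
          by (simp add: sum_distrib_left monev_add algebra_simps)
        then have "g la * monev m (mu + la) x + (\<Sum>b\<in>psupp g - {la}. g b * monev m (mu + b) x) = 0"
          using sum.remove[OF gfin la(1), of "\<lambda>b. g b * monev m (mu + b) x"] by simp
        then have h1: "g la * monev m (mu + la) x = - (\<Sum>b\<in>psupp g - {la}. g b * monev m (mu + b) x)"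
          by (rule eq_neg_iff_add_eq_0[THEN iffD2])
        have "monev m \<nu> x * g la = - (\<Sum>b\<in>psupp g - {la}. g b * monev m (mu + b) x)"
          using h1 nu_eq by (simp add: mult.commute)
        then have "monev m \<nu> x = - (\<Sum>b\<in>psupp g - {la}. g b * monev m (mu + b) x) / g la"
          by (subst nonzero_eq_divide_eq[OF gla])
        also have "\<dots> = (\<Sum>b\<in>psupp g - {la}. (- g b / g la) * monev m (mu + b) x)"
          by (simp add: sum_divide_distrib sum_negf[symmetric])
        finally show ?thesis .
      qed
      have "lspan m X ?D (\<lambda>x. \<Sum>b\<in>psupp g - {la}. (- g b / g la) * monev m (mu + b) x)"
      proof (rule lspan_sum)
        show "finite (psupp g - {la})" using gfin by simp
        show "\<forall>b\<in>psupp g - {la}. lspan m X ?D (monev m (mu + b))"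
        proof
          fix b assume b: "b \<in> psupp g - {la}"
          have "lex_less (mu + b) (mu + la)" using la(2) b by (intro lex_add) auto
          then have "lex_less (mu + b) \<nu>" unfolding nu_eq .
          thus "lspan m X ?D (monev m (mu + b))" using dec inD b by blast
        qed
      qed
      thus ?thesis by (rule lspan_cong) (simp add: eq)
    next
      case False
      have nz: "\<nu> \<noteq> (\<lambda>_. 0)" using False nu unfolding proj_reduced_mon_def by auto
      define K where "K = {i. 0 < \<nu> i}"
      have Ksub: "K \<subseteq> {..m}"
      proof
        fix j assume "j \<in> K"
        show "j \<in> {..m}"
        proof (rule ccontr)
          assume "j \<notin> {..m}"
          then have "j > m" by simp
          then have "\<nu> j = 0" using nu(1) unfolding mons_def by simp
          thus False using \<open>j \<in> K\<close> unfolding K_def by simp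
        qed
      qed
      have Kfin: "finite K" using finite_subset[OF Ksub] by simp
      have Kne: "K \<noteq> {}" using nz unfolding K_def by auto
      define k where "k = Max K"
      have kK: "k \<in> K" unfolding k_def using Kfin Kne by simp
      have km: "k \<le> m" using kK Ksub by auto
      have above: "\<forall>i>k. \<nu> i = 0"
      proof (intro allI impI)
        fix i assume "k < i"
        show "\<nu> i = 0"
        proof (rule ccontr)
          assume "\<nu> i \<noteq> 0"
          then have "i \<in> K" unfolding K_def by simp
          then have "i \<le> k" unfolding k_def using Kfin by simp
          thus False using \<open>k < i\<close> by simp
        qed
      qed
      have "\<not> (\<forall>i<k. \<nu> i \<le> ?q - 1)"
      proof
        assume "\<forall>i<k. \<nu> i \<le> ?q - 1"
        then have "proj_reduced_mon ?q m \<nu>" unfolding proj_reduced_mon_def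
          using nu(1) km kK above unfolding K_def by blast
        thus False using False by simp
      qed
      then obtain i where i: "i < k" "\<nu> i > ?q - 1" by (auto simp: not_le)
      have q2: "?q \<ge> 2" by (rule card_field_ge2)
      have iq: "\<nu> i \<ge> ?q" using i(2) q2 by simp
      have k1: "\<nu> k \<ge> 1" using kK unfolding K_def by simp
      define w where "w = (\<lambda>j. if j = i then \<nu> i - ?q else if j = k then \<nu> k - 1 else \<nu> j)"
      define \<nu>' where "\<nu>' = (\<lambda>j. if j = i then w i + 1 else if j = k then w k + ?q else w j)"
      have nu_eq: "\<nu> = (\<lambda>j. if j = i then w i + ?q else if j = k then w k + 1 else w j)"
        using iq k1 i(1) unfolding w_def by auto
      have ik: "i \<noteq> k" "i \<le> m" using i(1) km by auto
      have deg': "mdeg m \<nu>' = e"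
      proof -
        have "mdeg m \<nu>' = mdeg m w + 1 + ?q" unfolding \<nu>'_def by (rule mdeg_bump[OF ik km])
        moreover have "mdeg m \<nu> = mdeg m w + ?q + 1" by (subst nu_eq, rule mdeg_bump[OF ik km])
        ultimately show ?thesis using nu(2) by simp
      qed
      have mons': "\<nu>' \<in> mons m"
        using nu(1) ik km unfolding mons_def \<nu>'_def w_def by auto
      have all': "\<nu>' \<in> allD m e" unfolding allD_def using mons' deg' by simp
      have lex': "lex_less \<nu>' \<nu>"
        unfolding lex_less_def
      proof (rule exI[of _ i], intro conjI allI impI)
        fix j assume "j < i"
        then show "\<nu>' j = \<nu> j" using i(1) unfolding \<nu>'_def w_def by auto
      next
        show "\<nu>' i < \<nu> i" using q2 iq unfolding \<nu>'_def w_def by simp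
      qed
      have ev: "monev m \<nu>' x = monev m \<nu> x" for x :: "nat \<Rightarrow> 'a"
      proof -
        have "monev m \<nu> x = (\<Prod>j\<le>m. x j ^ (if j = i then w i + ?q else if j = k then w k + 1 else w j))"
          unfolding monev_def by (subst nu_eq) simp
        also have "\<dots> = monev m \<nu>' x"
          unfolding monev_def \<nu>'_def by (rule prod.cong) (auto simp: field_pow_shift)
        finally show ?thesis by simp
      qed
      have "lspan m X ?D (monev m \<nu>')" using dec[OF all' lex'] .
      thus ?thesis by (rule lspan_cong) (simp add: ev)
    qed
  qed
qed



lemma footprint:
  fixes G :: "nat \<Rightarrow> 'a::{finite,field} mpoly"
  assumes hG: "\<forall>i<r. psupp (G i) \<subseteq> Mbar CARD('a) m d" "\<forall>i<r. psupp (G i) \<noteq> {}"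
    and hc: "card (zero_set m r G) \<le> e + 1"
  shows "card (zero_set m r G) \<le> card (Delta CARD('a) m e ((\<lambda>i. lm (G i)) ` {..<r}))"
proof -
  define V where "V = zero_set m r G"
  define Dl where "Dl = Delta CARD('a) m e ((\<lambda>i. lm (G i)) ` {..<r})"
  have finDl: "finite Dl"
    unfolding Dl_def by (rule finite_subset[OF _ finite_Mbar[of "CARD('a)" m e]]) (auto simp: Delta_def)
  have Vsub: "V \<subseteq> proj_space TYPE('a) m" unfolding V_def zero_set_def by auto
  have Vfin: "finite V" using finite_subset[OF Vsub finite_proj_space] .
  define rep where "rep = (\<lambda>P::(nat \<Rightarrow> 'a) set. SOME z. z \<in> P)"
  have rep: "rep P \<in> P" if "P \<in> V" for P
  proof -
    have "\<exists>z. z \<in> P" using proj_nonempty Vsub that by blast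
    thus ?thesis unfolding rep_def by (rule someI_ex)
  qed
  have repP: "P = pclass (rep P)" "rep P \<noteq> (\<lambda>_. 0)" "\<forall>i>m. rep P i = 0" if "P \<in> V" for P
    using proj_mem[of P m "rep P"] rep[OF that] Vsub that by auto
  have repz: "\<forall>i<r. peval m (G i) (rep P) = 0" if "P \<in> V" for P
    using rep[OF that] that unfolding V_def zero_set_def by blast
  define X where "X = rep ` V"
  have hX: "\<forall>x\<in>X. \<forall>i<r. peval m (G i) x = 0" unfolding X_def using repz by blast
  have red: "\<forall>\<mu>\<in>allD m e. lspan m X Dl (monev m \<mu>)"
    unfolding Dl_def using reduction[OF hG hX] by blast
  have sep: "\<exists>j k. j \<le> m \<and> k \<le> m \<and> rep Q k * rep P j - rep Q j * rep P k \<noteq> 0"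
    if PQ: "P \<in> V" "Q \<in> V" "P \<noteq> Q" for P Q
  proof (rule ccontr)
    assume "\<not> ?thesis"
    then have all: "\<forall>j\<le>m. \<forall>k\<le>m. rep Q k * rep P j = rep Q j * rep P k" by auto
    obtain j0 where j0: "rep P j0 \<noteq> 0" using repP(2)[OF PQ(1)] by auto
    have j0m: "j0 \<le> m" using j0 repP(3)[OF PQ(1)] not_le by blast
    define c where "c = rep Q j0 / rep P j0"
    have veq: "rep Q = (\<lambda>i. c * rep P i)"
    proof
      fix i show "rep Q i = c * rep P i"
      proof (cases "i \<le> m")
        case True
        then have "rep Q i * rep P j0 = rep Q j0 * rep P i" using all j0m by blast
        thus ?thesis unfolding c_def using j0 by (simp add: field_simps)
      next
        case False thus ?thesis using repP(3)[OF PQ(1)] repP(3)[OF PQ(2)] by simp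
      qed
    qed
    have "c \<noteq> 0"
    proof
      assume "c = 0"
      then have "rep Q = (\<lambda>_. 0)" using veq by simp
      thus False using repP(2)[OF PQ(2)] by simp
    qed
    then have "rep Q \<in> pclass (rep P)" unfolding pclass_def using veq by blast
    then have "pclass (rep Q) = pclass (rep P)" by (rule pclass_eq)
    then have "Q = P" using repP(1)[OF PQ(1)] repP(1)[OF PQ(2)] by simp
    thus False using PQ(3) by simp
  qed
  define cond where "cond = (\<lambda>P Q (p::nat \<times> nat). fst p \<le> m \<and> snd p \<le> m \<and>
       rep Q (snd p) * rep P (fst p) - rep Q (fst p) * rep P (snd p) \<noteq> 0)"
  define jk where "jk = (\<lambda>P Q. SOME p. cond P Q p)"
  have jk: "cond P Q (jk P Q)" if PQ: "P \<in> V" "Q \<in> V" "P \<noteq> Q" for P Q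
  proof -
    obtain j k where "j \<le> m \<and> k \<le> m \<and> rep Q k * rep P j - rep Q j * rep P k \<noteq> 0"
      using sep[OF PQ] by blast
    then have "cond P Q (j, k)" unfolding cond_def by simp
    thus ?thesis unfolding jk_def by (rule someI)
  qed
  define j0 where "j0 = (\<lambda>P. SOME j. j \<le> m \<and> rep P j \<noteq> 0)"
  have j0: "j0 P \<le> m \<and> rep P (j0 P) \<noteq> 0" if P: "P \<in> V" for P
  proof -
    obtain j where j: "rep P j \<noteq> 0" using repP(2)[OF P] by auto
    have "j \<le> m" using j repP(3)[OF P] not_le by blast
    then have "\<exists>j. j \<le> m \<and> rep P j \<noteq> 0" using j by blast
    thus ?thesis unfolding j0_def by (rule someI_ex)
  qed
  define fP where "fP = (\<lambda>P x. (\<Prod>Q\<in>V-{P}. (rep Q (snd (jk P Q)) * x (fst (jk P Q)) - rep Q (fst (jk P Q)) * x (snd (jk P Q))))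
       * x (j0 P) ^ (e + 1 - card V))"
  define h where "h = (\<lambda>P. SOME c. \<forall>x\<in>X. fP P x / fP P (rep P) = (\<Sum>\<mu>\<in>Dl. c \<mu> * monev m \<mu> x))"
  have hP: "\<forall>x\<in>X. fP P x / fP P (rep P) = (\<Sum>\<mu>\<in>Dl. h P \<mu> * monev m \<mu> x)" if P: "P \<in> V" for P
  proof -
    have cV: "card V \<ge> 1" using P Vfin by (metis One_nat_def Suc_leI card_gt_0_iff empty_iff)
    have deg: "(e + 1 - card V) + card (V - {P}) = e" using cV hc P Vfin unfolding V_def by simp
    have "lspan m X (allD m ((e + 1 - card V) + card (V - {P}))) (fP P)"
      unfolding fP_def
    proof (rule inS_prod)
      show "finite (V - {P})" using Vfin by simp
      show "lspan m X (allD m (e + 1 - card V)) (\<lambda>x. x (j0 P) ^ (e + 1 - card V))"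
        using j0[OF P] by (intro inS_pow) simp
      show "\<forall>Q\<in>V - {P}. fst (jk P Q) \<le> m \<and> snd (jk P Q) \<le> m"
        using jk P unfolding cond_def by blast
    qed
    then have "lspan m X (allD m e) (fP P)" using deg by simp
    then have "lspan m X (allD m e) (\<lambda>x. (1 / fP P (rep P)) * fP P x)" by (rule lspan_smult)
    then have "lspan m X Dl (\<lambda>x. (1 / fP P (rep P)) * fP P x)" by (rule lspan_trans[OF finite_allD _ red])
    then have "\<exists>c. \<forall>x\<in>X. fP P x / fP P (rep P) = (\<Sum>\<mu>\<in>Dl. c \<mu> * monev m \<mu> x)"
      unfolding lspan_def by simp
    thus ?thesis unfolding h_def by (rule someI_ex)
  qed
  have fPP: "fP P (rep P) \<noteq> 0" if P: "P \<in> V" for P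
  proof -
    have "\<forall>Q\<in>V-{P}. rep Q (snd (jk P Q)) * rep P (fst (jk P Q)) - rep Q (fst (jk P Q)) * rep P (snd (jk P Q)) \<noteq> 0"
      using jk P unfolding cond_def by blast
    then have "(\<Prod>Q\<in>V-{P}. rep Q (snd (jk P Q)) * rep P (fst (jk P Q)) - rep Q (fst (jk P Q)) * rep P (snd (jk P Q))) \<noteq> 0"
      using Vfin by (simp add: prod_zero_iff)
    moreover have "rep P (j0 P) ^ (e + 1 - card V) \<noteq> 0" using j0[OF P] by simp
    ultimately show ?thesis unfolding fP_def by simp
  qed
  have fPQ: "fP P (rep Q) = 0" if PQ: "P \<in> V" "Q \<in> V" "P \<noteq> Q" for P Q
  proof -
    have ex: "\<exists>Q'\<in>V-{P}. rep Q' (snd (jk P Q')) * rep Q (fst (jk P Q')) - rep Q' (fst (jk P Q')) * rep Q (snd (jk P Q')) = 0"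
      by (rule bexI[of _ Q]) (use PQ in auto)
    have "(\<Prod>Q'\<in>V-{P}. rep Q' (snd (jk P Q')) * rep Q (fst (jk P Q')) - rep Q' (fst (jk P Q')) * rep Q (snd (jk P Q'))) = 0"
      by (subst prod_zero_iff[OF finite_Diff[OF Vfin]]) (rule ex)
    thus ?thesis unfolding fP_def by simp
  qed
  have repinj: "P = Q" if "P \<in> V" "Q \<in> V" "rep P = rep Q" for P Q
    using repP(1)[OF that(1)] repP(1)[OF that(2)] that(3) by simp
  define h' where "h' = (\<lambda>P \<mu>. if \<mu> \<in> Dl then h P \<mu> else 0)"
  have key: "(if P = Q then 1 else 0) = (\<Sum>\<mu>\<in>Dl. h' P \<mu> * monev m \<mu> (rep Q))" if PQ: "P \<in> V" "Q \<in> V" for P Q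
  proof -
    have "rep Q \<in> X" unfolding X_def using PQ by simp
    then have "fP P (rep Q) / fP P (rep P) = (\<Sum>\<mu>\<in>Dl. h P \<mu> * monev m \<mu> (rep Q))" using hP[OF PQ(1)] by blast
    moreover have "fP P (rep Q) / fP P (rep P) = (if P = Q then 1 else 0)"
      using fPP[OF PQ(1)] fPQ[OF PQ] by auto
    moreover have "(\<Sum>\<mu>\<in>Dl. h P \<mu> * monev m \<mu> (rep Q)) = (\<Sum>\<mu>\<in>Dl. h' P \<mu> * monev m \<mu> (rep Q))"
      unfolding h'_def by (rule sum.cong) auto
    ultimately show ?thesis by simp
  qed
  have ind: "indepI V h'"
    unfolding indepI_def
  proof (intro allI impI ballI)
    fix c Q assume eq: "(\<lambda>a. \<Sum>P\<in>V. c P * h' P a) = (\<lambda>_. 0)" and Q: "Q \<in> V"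
    have "c Q = (\<Sum>P\<in>V. (if P = Q then 1 else 0) * c P)"
      using delta_sum[OF Vfin Q, of c] by simp
    also have "\<dots> = (\<Sum>P\<in>V. c P * (\<Sum>\<mu>\<in>Dl. h' P \<mu> * monev m \<mu> (rep Q)))"
      using key Q by (intro sum.cong) auto
    also have "\<dots> = (\<Sum>P\<in>V. \<Sum>\<mu>\<in>Dl. c P * h' P \<mu> * monev m \<mu> (rep Q))"
      by (simp add: sum_distrib_left mult.assoc)
    also have "\<dots> = (\<Sum>\<mu>\<in>Dl. \<Sum>P\<in>V. c P * h' P \<mu> * monev m \<mu> (rep Q))"
      by (rule sum.swap)
    also have "\<dots> = (\<Sum>\<mu>\<in>Dl. (\<Sum>P\<in>V. c P * h' P \<mu>) * monev m \<mu> (rep Q))"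
      by (simp add: sum_distrib_right)
    also have "\<dots> = 0" using eq by (simp add: fun_eq_iff)
    finally show "c Q = 0" .
  qed
  have supp: "\<forall>P\<in>V. psupp (h' P) \<subseteq> Dl" unfolding h'_def psupp_def by auto
  have "card V \<le> card Dl" by (rule indep_card_le[OF finDl Vfin ind supp])
  thus ?thesis unfolding V_def Dl_def .
qed



theorem lemma5p6:
  fixes d r m :: nat
  assumes "m \<ge> 1"
    and "1 \<le> r"
    and "r \<le> (m + d choose d) - rdim TYPE('a::{finite,field}) m d"
  shows "ebar TYPE('a) r d m =
           Max {card (zero_set m r F) | F :: nat \<Rightarrow> 'a mpoly.
                  lin_indep_fam r F \<and> (\<forall>i<r. pr_hom CARD('a) m d (F i))
                  \<and> inj_on (\<lambda>i. lm (F i)) {..<r}}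
       \<and> (\<exists>e0::nat. \<forall>e\<ge>e0. ebar TYPE('a) r d m \<le> A_bound CARD('a) r d m e)"
proof -
  define Sset where "Sset = {card (zero_set m r F) | F :: nat \<Rightarrow> 'a mpoly.
      lin_indep_fam r F \<and> (\<forall>i<r. pr_hom CARD('a) m d (F i))}"
  have eb: "ebar TYPE('a) r d m = Max Sset" unfolding ebar_def Sset_def ..
  have eqS: "Sset = {card (zero_set m r F) | F :: nat \<Rightarrow> 'a mpoly.
                  lin_indep_fam r F \<and> (\<forall>i<r. pr_hom CARD('a) m d (F i))
                  \<and> inj_on (\<lambda>i. lm (F i)) {..<r}}" unfolding Sset_def by (rule part1_sets)
  have P1: "ebar TYPE('a) r d m =
           Max {card (zero_set m r F) | F :: nat \<Rightarrow> 'a mpoly.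
                  lin_indep_fam r F \<and> (\<forall>i<r. pr_hom CARD('a) m d (F i))
                  \<and> inj_on (\<lambda>i. lm (F i)) {..<r}}"
    unfolding eb eqS ..
  have P2: "\<exists>e0::nat. \<forall>e\<ge>e0. ebar TYPE('a) r d m \<le> A_bound CARD('a) r d m e"
  proof (cases "Sset = {}")
    case True
    have Aempty: "{card (Delta CARD('a) m e S) | S. S \<subseteq> Mbar CARD('a) m d \<and> card S = r} = {}" for e
    proof (rule ccontr)
      assume "\<not> ?thesis"
      then obtain S where S: "S \<subseteq> Mbar CARD('a) m d" "card S = r" by blast
      have "finite S" using finite_subset[OF S(1) finite_Mbar] .
      then obtain hb where hb: "bij_betw hb {0..<r} S" using ex_bij_betw_nat_finite[OF \<open>finite S\<close>] S(2) by auto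
      have hbi: "inj_on hb {..<r}" "\<forall>i<r. hb i \<in> S" using hb unfolding bij_betw_def by (auto simp: lessThan_atLeast0)
      define F :: "nat \<Rightarrow> 'a mpoly" where "F = (\<lambda>i b. if b = hb i then 1 else 0)"
      have "lin_indep_fam r F" unfolding lin_indep_fam_def
      proof (intro allI impI)
        fix c :: "nat \<Rightarrow> 'a" and j assume eq: "(\<lambda>a. \<Sum>i<r. c i * F i a) = (\<lambda>_. 0)" and j: "j < r"
        have "(\<Sum>i<r. c i * F i (hb j)) = (\<Sum>i\<in>{..<r}. (if i = j then 1 else 0) * c i)"
        proof (rule sum.cong[OF refl])
          fix i assume "i \<in> {..<r}"
          then have "(hb j = hb i) = (i = j)" using hbi(1) j unfolding inj_on_def by auto
          thus "c i * F i (hb j) = (if i = j then 1 else 0) * c i" unfolding F_def by simp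
        qed
        also have "\<dots> = c j" using delta_sum[of "{..<r}" j c] j by simp
        finally show "c j = 0" using fun_cong[OF eq, of "hb j"] by simp
      qed
      moreover have "\<forall>i<r. pr_hom CARD('a) m d (F i)"
        unfolding pr_hom_def psupp_def F_def using hbi(2) S(1) by auto
      ultimately have "card (zero_set m r F) \<in> Sset" unfolding Sset_def by blast
      thus False using True by simp
    qed
    have "ebar TYPE('a) r d m = A_bound CARD('a) r d m e" for e
      unfolding eb True A_bound_def Aempty ..
    thus ?thesis by simp
  next
    case False
    have Sfin: "finite Sset"
    proof (rule finite_subset[of _ "{..card (proj_space TYPE('a) m)}"])
      show "Sset \<subseteq> {..card (proj_space TYPE('a) m)}"
      proof
        fix n assume "n \<in> Sset"
        then obtain F :: "nat \<Rightarrow> 'a mpoly" where "n = card (zero_set m r F)" unfolding Sset_def by blast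
        moreover have "zero_set m r F \<subseteq> proj_space TYPE('a) m" unfolding zero_set_def by auto
        then have "card (zero_set m r F) \<le> card (proj_space TYPE('a) m)" by (rule card_mono[OF finite_proj_space])
        ultimately have "n \<le> card (proj_space TYPE('a) m)" by (rule ord_eq_le_trans)
        thus "n \<in> {..card (proj_space TYPE('a) m)}" unfolding atMost_iff .
      qed
    qed simp
    have "Max Sset \<in> Sset" using Max_in[OF Sfin False] .
    then have "ebar TYPE('a) r d m \<in> {card (zero_set m r F) | F :: nat \<Rightarrow> 'a mpoly.
                  lin_indep_fam r F \<and> (\<forall>i<r. pr_hom CARD('a) m d (F i))
                  \<and> inj_on (\<lambda>i. lm (F i)) {..<r}}"
      unfolding eb eqS[symmetric] .
    then obtain G :: "nat \<Rightarrow> 'a mpoly" where G: "ebar TYPE('a) r d m = card (zero_set m r G)"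
      "lin_indep_fam r G" "\<forall>i<r. pr_hom CARD('a) m d (G i)" "inj_on (\<lambda>i. lm (G i)) {..<r}"
      by blast
    have sG: "\<forall>i<r. psupp (G i) \<subseteq> Mbar CARD('a) m d" using G(3) unfolding pr_hom_def by blast
    have nG: "\<forall>i<r. psupp (G i) \<noteq> {}"
      using indep_nonzero[OF G(2)[unfolded lin_indep_eq]] by simp
    define S where "S = (\<lambda>i. lm (G i)) ` {..<r}"
    have SM: "S \<subseteq> Mbar CARD('a) m d"
    proof
      fix b assume "b \<in> S"
      then obtain i where i: "i < r" "b = lm (G i)" unfolding S_def by blast
      have "finite (psupp (G i))" using finite_subset[OF _ finite_Mbar] sG i(1) by blast
      then have "lm (G i) \<in> psupp (G i)" using lm_in nG i(1) by blast
      thus "b \<in> Mbar CARD('a) m d" using sG i by blast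
    qed
    have Scard: "card S = r" unfolding S_def using card_image[OF G(4)] by simp
    show ?thesis
    proof (rule exI[of _ "ebar TYPE('a) r d m"], intro allI impI)
      fix e assume e: "ebar TYPE('a) r d m \<le> e"
      have "card (zero_set m r G) \<le> e + 1" using e G(1) by simp
      then have "card (zero_set m r G) \<le> card (Delta CARD('a) m e S)"
        unfolding S_def by (rule footprint[OF sG nG])
      also have "\<dots> \<le> A_bound CARD('a) r d m e"
        unfolding A_bound_def
      proof (rule Max_ge)
        have "{card (Delta CARD('a) m e S) | S. S \<subseteq> Mbar CARD('a) m d \<and> card S = r}
              \<subseteq> (\<lambda>S. card (Delta CARD('a) m e S)) ` Pow (Mbar CARD('a) m d)" by blast
        thus "finite {card (Delta CARD('a) m e S) | S. S \<subseteq> Mbar CARD('a) m d \<and> card S = r}"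
          by (rule finite_subset) (simp add: finite_Mbar)
        show "card (Delta CARD('a) m e S) \<in> {card (Delta CARD('a) m e S) | S. S \<subseteq> Mbar CARD('a) m d \<and> card S = r}"
          using SM Scard by blast
      qed
      finally show "ebar TYPE('a) r d m \<le> A_bound CARD('a) r d m e" using G(1) by simp
    qed
  qed
  show ?thesis by (rule conjI[OF P1 P2])
qed

end
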